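(* Let $\{x^k\}$ be generated by the MPG algorithm described in the context. Then for every $j=1,\ldots,m$ the sequence $\{F_j(x^k)\}$ is non-increasing, i.e., $F(x^{k+1})\preceq F(x^k)$ for every $k$ for which $x^{k+1}$ is generated.
   Context: Let $F:\mathbb{R}^n\to(\mathbb{R}\cup\{+\infty\})^m$, $F=(F_1,\ldots,F_m)$, with $F_j=G_j+H_j$ for $j=1,\ldots,m$, where: (i) each $G_j:\mathbb{R}^n\to\mathbb{R}$ is continuously differentiable and convex; (ii) each $H_j:\mathbb{R}^n\to\mathbb{R}\cup\{+\infty\}$ is proper, convex and continuous on its domain; (iii) $\mathrm{dom}(F):=\{x: F_j(x)<+\infty\ \forall j\}$ is nonempty and closed. For $u,v\in\mathbb{R}^m$, $u\preceq v$ means $u_j\le v_j$ for all $j$. For $x\in\mathrm{dom}(F)$ and $\alpha>0$ define $\psi_x(u):=\max_{j=1,\ldots,m}\big(\nabla G_j(x)^\top(u-x)+H_j(u)-H_j(x)\big)$, $p_\alpha(x):=\arg\min_{u\in\mathbb{R}^n}\psi_x(u)+\frac{1}{2\alpha}\|u-x\|^2$ (unique minimizer), and $\theta_\alpha(x):=\psi_x(p_\alpha(x))+\frac{1}{2\alpha}\|p_\alpha(x)-x\|^2$. MPG algorithm. Step 0: choose $x^0\in\mathrm{dom}(F)$, $\alpha>0$, $\gamma\in(0,2/\alpha)$, $0<\tau_1<\tau_2<1$; set $k=0$. Step 1: compute $p^k:=p_\alpha(x^k)$ and $\theta_\alpha(x^k)$. Step 2: if $\theta_\alpha(x^k)=0$,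 stop. Step 3: set $d^k:=p^k-x^k$, take $j_k^*\in\arg\max_{j}\nabla G_j(x^k)^\top d^k$, set $t=1$. Step 3.1: if $G_{j_k^*}(x^k+td^k)\le G_{j_k^*}(x^k)+t\nabla G_{j_k^*}(x^k)^\top d^k+t\frac{\gamma}{2}\|d^k\|^2$, go to Step 3.2; otherwise replace $t$ by some value in $[\tau_1 t,\tau_2 t]$ and repeat Step 3.1. Step 3.2: if $F(x^k+td^k)\preceq F(x^k)$, set $t_k=t$ and go to Step 4. Step 3.3: replace $t$ by some value in $[\tau_1 t,\tau_2 t]$; if $G_j(x^k+td^k)\le G_j(x^k)+t\nabla G_j(x^k)^\top d^k+t\frac{\gamma}{2}\|d^k\|^2$ for all $j=1,\ldots,m$, set $t_k=t$ and go to Step 4; otherwise repeat Step 3.3. Step 4: $x^{k+1}:=x^k+t_kd^k$, $k\leftarrow k+1$, go to Step 1. *)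

theory Defs
  imports "HOL-Analysis.Analysis"
begin

text \<open>Objectives are indexed by j < m (0-based). G j is real valued with gradient gradG j,
  H j is extended-real valued (value \<infinity> allowed).\<close>

definition proper_convex_ext :: "('a::real_vector \<Rightarrow> ereal) \<Rightarrow> bool" where
  "proper_convex_ext h \<longleftrightarrow>
     (\<forall>x. h x \<noteq> -\<infinity>) \<and> (\<exists>x. h x \<noteq> \<infinity>) \<and>
     (\<forall>x y t. 0 \<le> t \<and> t \<le> 1 \<longrightarrow>
        h ((1 - t) *\<^sub>R x + t *\<^sub>R y) \<le> ereal (1 - t) * h x + ereal t * h y)"

definition Fobj :: "(nat \<Rightarrow> 'a \<Rightarrow> real) \<Rightarrow> (nat \<Rightarrow> 'a \<Rightarrow> ereal) \<Rightarrow> nat \<Rightarrow> 'a \<Rightarrow> ereal" where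
  "Fobj G H j x = ereal (G j x) + H j x"

definition domF :: "nat \<Rightarrow> (nat \<Rightarrow> 'a \<Rightarrow> ereal) \<Rightarrow> 'a set" where
  "domF m H = {x. \<forall>j<m. H j x < \<infinity>}"

definition Fle :: "nat \<Rightarrow> (nat \<Rightarrow> 'a \<Rightarrow> real) \<Rightarrow> (nat \<Rightarrow> 'a \<Rightarrow> ereal) \<Rightarrow> 'a \<Rightarrow> 'a \<Rightarrow> bool" where
  "Fle m G H u v \<longleftrightarrow> (\<forall>j<m. Fobj G H j u \<le> Fobj G H j v)"

definition psi :: "nat \<Rightarrow> (nat \<Rightarrow> 'a::real_inner \<Rightarrow> 'a) \<Rightarrow> (nat \<Rightarrow> 'a \<Rightarrow> ereal) \<Rightarrow> 'a \<Rightarrow> 'a \<Rightarrow> ereal" where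
  "psi m gradG H x u = Max ((\<lambda>j. ereal (inner (gradG j x) (u - x)) + H j u - H j x) ` {..<m})"

definition prox_obj :: "nat \<Rightarrow> (nat \<Rightarrow> 'a::real_inner \<Rightarrow> 'a) \<Rightarrow> (nat \<Rightarrow> 'a \<Rightarrow> ereal) \<Rightarrow> real \<Rightarrow> 'a \<Rightarrow> 'a \<Rightarrow> ereal" where
  "prox_obj m gradG H \<alpha> x u = psi m gradG H x u + ereal (norm (u - x) ^ 2 / (2 * \<alpha>))"

definition p_alpha :: "nat \<Rightarrow> (nat \<Rightarrow> 'a::real_inner \<Rightarrow> 'a) \<Rightarrow> (nat \<Rightarrow> 'a \<Rightarrow> ereal) \<Rightarrow> real \<Rightarrow> 'a \<Rightarrow> 'a" where
  "p_alpha m gradG H \<alpha> x = (THE u. \<forall>v. prox_obj m gradG H \<alpha> x u \<le> prox_obj m gradG H \<alpha> x v)"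

definition theta_alpha :: "nat \<Rightarrow> (nat \<Rightarrow> 'a::real_inner \<Rightarrow> 'a) \<Rightarrow> (nat \<Rightarrow> 'a \<Rightarrow> ereal) \<Rightarrow> real \<Rightarrow> 'a \<Rightarrow> ereal" where
  "theta_alpha m gradG H \<alpha> x = prox_obj m gradG H \<alpha> x (p_alpha m gradG H \<alpha> x)"

definition armijo :: "(nat \<Rightarrow> 'a::real_inner \<Rightarrow> real) \<Rightarrow> (nat \<Rightarrow> 'a \<Rightarrow> 'a) \<Rightarrow> real \<Rightarrow> 'a \<Rightarrow> 'a \<Rightarrow> nat \<Rightarrow> real \<Rightarrow> bool" where
  "armijo G gradG \<gamma> x d j t \<longleftrightarrow>
     G j (x + t *\<^sub>R d) \<le> G j x + t * inner (gradG j x) d + t * (\<gamma> / 2) * (norm d) ^ 2"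

definition backtrack_chain :: "real \<Rightarrow> real \<Rightarrow> (nat \<Rightarrow> real) \<Rightarrow> nat \<Rightarrow> bool" where
  "backtrack_chain \<tau>1 \<tau>2 s N \<longleftrightarrow> (\<forall>i<N. \<tau>1 * s i \<le> s (Suc i) \<and> s (Suc i) \<le> \<tau>2 * s i)"

text \<open>One iteration (Steps 1--4) of the MPG algorithm from x to x', over all admissible
  choices of j_k^* and of the backtracking values.\<close>
definition mpg_step ::
  "nat \<Rightarrow> (nat \<Rightarrow> 'a::real_inner \<Rightarrow> real) \<Rightarrow> (nat \<Rightarrow> 'a \<Rightarrow> 'a) \<Rightarrow> (nat \<Rightarrow> 'a \<Rightarrow> ereal)
   \<Rightarrow> real \<Rightarrow> real \<Rightarrow> real \<Rightarrow> real \<Rightarrow> 'a \<Rightarrow> 'a \<Rightarrow> bool" where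
  "mpg_step m G gradG H \<alpha> \<gamma> \<tau>1 \<tau>2 x x' \<longleftrightarrow>
     (let p = p_alpha m gradG H \<alpha> x; d = p - x in
      theta_alpha m gradG H \<alpha> x \<noteq> 0 \<and>
      (\<exists>jstar t tk.
         jstar < m \<and> (\<forall>j<m. inner (gradG j x) d \<le> inner (gradG jstar x) d) \<and>
         \<comment> \<open>Step 3.1\<close>
         (\<exists>s N. s 0 = 1 \<and> backtrack_chain \<tau>1 \<tau>2 s N \<and>
                (\<forall>i<N. \<not> armijo G gradG \<gamma> x d jstar (s i)) \<and>
                armijo G gradG \<gamma> x d jstar (s N) \<and> t = s N) \<and>
         \<comment> \<open>Steps 3.2 / 3.3\<close>
         ((Fle m G H (x + t *\<^sub>R d) x \<and> tk = t) \<or>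
          (\<not> Fle m G H (x + t *\<^sub>R d) x \<and>
           (\<exists>s N. 1 \<le> N \<and> s 0 = t \<and> backtrack_chain \<tau>1 \<tau>2 s N \<and>
                  (\<forall>i. 1 \<le> i \<and> i < N \<longrightarrow> \<not> (\<forall>j<m. armijo G gradG \<gamma> x d j (s i))) \<and>
                  (\<forall>j<m. armijo G gradG \<gamma> x d j (s N)) \<and> tk = s N))) \<and>
         \<comment> \<open>Step 4\<close>
         x' = x + tk *\<^sub>R d))"

end

theory Submission
  imports Defs
begin

definition hr :: "(nat \<Rightarrow> 'a \<Rightarrow> ereal) \<Rightarrow> nat \<Rightarrow> 'a \<Rightarrow> real" where
  "hr H j u = real_of_ereal (H j u)"

definition trm :: "(nat \<Rightarrow> 'a::real_inner \<Rightarrow> 'a) \<Rightarrow> (nat \<Rightarrow> 'a \<Rightarrow> ereal) \<Rightarrow> 'a \<Rightarrow> nat \<Rightarrow> 'a \<Rightarrow> real" where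
  "trm gradG H x j u = inner (gradG j x) (u - x) + hr H j u - hr H j x"

definition gr :: "nat \<Rightarrow> (nat \<Rightarrow> 'a::real_inner \<Rightarrow> 'a) \<Rightarrow> (nat \<Rightarrow> 'a \<Rightarrow> ereal) \<Rightarrow> 'a \<Rightarrow> 'a \<Rightarrow> real" where
  "gr m gradG H x u = Max ((\<lambda>j. trm gradG H x j u) ` {..<m})"

definition fr :: "nat \<Rightarrow> (nat \<Rightarrow> 'a::real_inner \<Rightarrow> 'a) \<Rightarrow> (nat \<Rightarrow> 'a \<Rightarrow> ereal) \<Rightarrow> real \<Rightarrow> 'a \<Rightarrow> 'a \<Rightarrow> real" where
  "fr m gradG H \<alpha> x u = gr m gradG H x u + norm (u - x) ^ 2 / (2 * \<alpha>)"

lemma Max_cont: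
  assumes "finite I" "I \<noteq> {}" "\<And>i. i \<in> I \<Longrightarrow> continuous_on S (f i)"
  shows "continuous_on S (\<lambda>u. Max ((\<lambda>i. f i u) ` I) :: real)"
  using assms
proof (induction I rule: finite_ne_induct)
  case (singleton x)
  then show ?case by simp
next
  case (insert a A)
  have "(\<lambda>u. Max ((\<lambda>i. f i u) ` insert a A)) = (\<lambda>u. max (f a u) (Max ((\<lambda>i. f i u) ` A)))"
    using insert by (auto simp: Max_insert)
  then show ?case using insert by (auto intro!: continuous_on_max)
qed

lemma chain_bounds:
  assumes "backtrack_chain \<tau>1 \<tau>2 s N" "0 < \<tau>1" "\<tau>2 < 1" "0 \<le> s 0" "s 0 \<le> 1"
  shows "i \<le> N \<Longrightarrow> 0 \<le> s i \<and> s i \<le> 1"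
proof (induction i)
  case 0 then show ?case using assms by simp
next
  case (Suc i)
  then have "\<tau>1 * s i \<le> s (Suc i) \<and> s (Suc i) \<le> \<tau>2 * s i" using assms(1) unfolding backtrack_chain_def by simp
  moreover have "0 \<le> s i \<and> s i \<le> 1" using Suc by simp
  moreover have "0 \<le> \<tau>1 * s i" using assms(2) calculation by simp
  moreover have "\<tau>2 * s i \<le> 1 * s i" using assms(3) calculation by (intro mult_right_mono) auto
  ultimately show ?case by linarith
qed

context
  fixes m :: nat and gradG :: "nat \<Rightarrow> 'a::euclidean_space \<Rightarrow> 'a" and H :: "nat \<Rightarrow> 'a \<Rightarrow> ereal"
    and \<alpha> :: real and x :: 'a
  assumes m_pos: "0 < m"
    and H_pc: "\<And>j. j < m \<Longrightarrow> proper_convex_ext (H j)"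
    and H_cont: "\<And>j. j < m \<Longrightarrow> continuous_on {y. H j y \<noteq> \<infinity>} (H j)"
    and dom_closed: "closed (domF m H)"
    and alpha: "0 < \<alpha>"
    and xD: "x \<in> domF m H"
begin

lemma Hfin: "u \<in> domF m H \<Longrightarrow> j < m \<Longrightarrow> H j u = ereal (hr H j u)"
proof -
  assume u: "u \<in> domF m H" and j: "j < m"
  have "H j u \<noteq> -\<infinity>" using H_pc[OF j] unfolding proper_convex_ext_def by blast
  moreover have "H j u < \<infinity>" using u j unfolding domF_def by blast
  ultimately show ?thesis unfolding hr_def by (cases "H j u") auto
qed

lemma psi_D: assumes "u \<in> domF m H" shows "psi m gradG H x u = ereal (gr m gradG H x u)"
proof -
  have "(\<lambda>j. ereal (inner (gradG j x) (u - x)) + H j u - H j x) ` {..<m}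
        = ereal ` ((\<lambda>j. trm gradG H x j u) ` {..<m})"
    using Hfin[OF assms] Hfin[OF xD] by (auto simp: trm_def image_iff)
  moreover have "ereal (Max ((\<lambda>j. trm gradG H x j u) ` {..<m})) = Max (ereal ` ((\<lambda>j. trm gradG H x j u) ` {..<m}))"
    by (rule mono_Max_commute) (use m_pos in \<open>auto simp: mono_def\<close>)
  ultimately show ?thesis unfolding psi_def gr_def by simp
qed

lemma psi_nD: assumes "u \<notin> domF m H" shows "psi m gradG H x u = \<infinity>"
proof -
  obtain j where j: "j < m" "H j u = \<infinity>" using assms unfolding domF_def by auto
  have "ereal (inner (gradG j x) (u - x)) + H j u - H j x = \<infinity>"
    using j Hfin[OF xD j(1)] by simp
  moreover have "ereal (inner (gradG j x) (u - x)) + H j u - H j x \<le> psi m gradG H x u"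
    unfolding psi_def by (rule Max_ge) (use j(1) in auto)
  ultimately show ?thesis by (simp add: top_unique[symmetric] top_ereal_def)
qed

lemma prox_D: "u \<in> domF m H \<Longrightarrow> prox_obj m gradG H \<alpha> x u = ereal (fr m gradG H \<alpha> x u)"
  unfolding prox_obj_def fr_def by (simp add: psi_D)

lemma prox_nD: "u \<notin> domF m H \<Longrightarrow> prox_obj m gradG H \<alpha> x u = \<infinity>"
  unfolding prox_obj_def by (simp add: psi_nD)

lemma hr_convex:
  assumes "a \<in> domF m H" "b \<in> domF m H" "0 \<le> t" "t \<le> 1" "j < m"
  shows "H j ((1 - t) *\<^sub>R a + t *\<^sub>R b) = ereal (hr H j ((1 - t) *\<^sub>R a + t *\<^sub>R b))"
    and "hr H j ((1 - t) *\<^sub>R a + t *\<^sub>R b) \<le> (1 - t) * hr H j a + t * hr H j b"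
proof -
  have le: "H j ((1 - t) *\<^sub>R a + t *\<^sub>R b) \<le> ereal ((1 - t) * hr H j a + t * hr H j b)"
  proof -
    have "H j ((1 - t) *\<^sub>R a + t *\<^sub>R b) \<le> ereal (1 - t) * H j a + ereal t * H j b"
      using H_pc[OF assms(5)] assms(3,4) unfolding proper_convex_ext_def by blast
    also have "\<dots> = ereal ((1 - t) * hr H j a + t * hr H j b)"
      using Hfin[OF assms(1,5)] Hfin[OF assms(2,5)] by simp
    finally show ?thesis .
  qed
  have nm: "H j ((1 - t) *\<^sub>R a + t *\<^sub>R b) \<noteq> -\<infinity>" using H_pc[OF assms(5)] unfolding proper_convex_ext_def by blast
  show e: "H j ((1 - t) *\<^sub>R a + t *\<^sub>R b) = ereal (hr H j ((1 - t) *\<^sub>R a + t *\<^sub>R b))"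
    using le nm unfolding hr_def by (cases "H j ((1 - t) *\<^sub>R a + t *\<^sub>R b)") auto
  show "hr H j ((1 - t) *\<^sub>R a + t *\<^sub>R b) \<le> (1 - t) * hr H j a + t * hr H j b"
    using le unfolding e by simp
qed

lemma dom_convex:
  assumes "a \<in> domF m H" "b \<in> domF m H" "0 \<le> t" "t \<le> 1"
  shows "(1 - t) *\<^sub>R a + t *\<^sub>R b \<in> domF m H"
  unfolding domF_def using hr_convex(1)[OF assms] by auto

lemma gr_convex:
  assumes "a \<in> domF m H" "b \<in> domF m H" "0 \<le> t" "t \<le> 1"
  shows "gr m gradG H x ((1 - t) *\<^sub>R a + t *\<^sub>R b) \<le> (1 - t) * gr m gradG H x a + t * gr m gradG H x b"
proof -
  let ?z = "(1 - t) *\<^sub>R a + t *\<^sub>R b"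
  have "gr m gradG H x ?z \<in> (\<lambda>j. trm gradG H x j ?z) ` {..<m}"
    unfolding gr_def by (rule Max_in) (use m_pos in auto)
  then obtain j where j: "j < m" "gr m gradG H x ?z = trm gradG H x j ?z" by auto
  have zx: "?z - x = (1 - t) *\<^sub>R (a - x) + t *\<^sub>R (b - x)"
    by (simp add: scaleR_diff_right scaleR_diff_left)
  have lin: "inner (gradG j x) (?z - x) = (1 - t) * inner (gradG j x) (a - x) + t * inner (gradG j x) (b - x)"
    unfolding zx by (simp only: inner_add_right inner_scaleR_right)
  have hc: "hr H j ?z \<le> (1 - t) * hr H j a + t * hr H j b" by (rule hr_convex(2)[OF assms j(1)])
  have eq: "(1 - t) * trm gradG H x j a + t * trm gradG H x j b
     = (1 - t) * inner (gradG j x) (a - x) + t * inner (gradG j x) (b - x) + ((1 - t) * hr H j a + t * hr H j b) - hr H j x"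
    unfolding trm_def by (simp add: algebra_simps)
  have "trm gradG H x j ?z \<le> (1 - t) * trm gradG H x j a + t * trm gradG H x j b"
    unfolding eq using hc lin unfolding trm_def by linarith
  also have "\<dots> \<le> (1 - t) * gr m gradG H x a + t * gr m gradG H x b"
  proof -
    have h1: "trm gradG H x j a \<le> gr m gradG H x a" unfolding gr_def by (rule Max_ge) (use j(1) in auto)
    have h2: "trm gradG H x j b \<le> gr m gradG H x b" unfolding gr_def by (rule Max_ge) (use j(1) in auto)
    show ?thesis
      by (rule add_mono[OF mult_left_mono[OF h1] mult_left_mono[OF h2]]) (use assms in auto)
  qed
  finally show ?thesis using j(2) by simp
qed

lemma gr_x: "gr m gradG H x x = 0"
proof -
  have "(\<lambda>j. trm gradG H x j x) ` {..<m} = {0}" using m_pos by (auto simp: trm_def)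
  then show ?thesis unfolding gr_def by simp
qed

lemma gr_cont: "continuous_on (domF m H) (gr m gradG H x)"
proof -
  have hc: "continuous_on (domF m H) (hr H j)" if j: "j < m" for j
  proof -
    have c: "continuous_on (domF m H) (H j)"
      using H_cont[OF j] by (rule continuous_on_subset) (auto simp: domF_def j)
    show ?thesis unfolding continuous_on_def
    proof
      fix u assume u: "u \<in> domF m H"
      have "(H j \<longlongrightarrow> ereal (hr H j u)) (at u within domF m H)"
        using c u Hfin[OF u j] unfolding continuous_on_def by metis
      then have "((\<lambda>v. real_of_ereal (H j v)) \<longlongrightarrow> hr H j u) (at u within domF m H)"
        by (rule lim_real_of_ereal)
      then show "(hr H j \<longlongrightarrow> hr H j u) (at u within domF m H)" unfolding hr_def[abs_def] by simp
    qed
  qed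
  show ?thesis unfolding gr_def[abs_def] trm_def
    using m_pos hc by (intro Max_cont) (auto intro!: continuous_intros)
qed

lemma fr_cont: "continuous_on (domF m H) (fr m gradG H \<alpha> x)"
  unfolding fr_def[abs_def] using alpha by (intro continuous_intros gr_cont) auto

lemma fr_x: "fr m gradG H \<alpha> x x = 0"
  unfolding fr_def by (simp add: gr_x)

lemma gr_lower:
  obtains B where "0 \<le> B" "\<And>u. u \<in> domF m H \<Longrightarrow> 1 \<le> norm (u - x) \<Longrightarrow> - B * norm (u - x) \<le> gr m gradG H x u"
proof -
  let ?D = "domF m H"
  let ?K = "?D \<inter> cball x 1"
  have K: "compact ?K" using dom_closed by (intro closed_Int_compact) auto
  have Kne: "?K \<noteq> {}" using xD by auto
  have Kc: "continuous_on ?K (gr m gradG H x)" by (rule continuous_on_subset[OF gr_cont]) auto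
  obtain w0 where w0: "w0 \<in> ?K" "\<And>y. y \<in> ?K \<Longrightarrow> gr m gradG H x w0 \<le> gr m gradG H x y"
    using continuous_attains_inf[OF K Kne Kc] by blast
  define B where "B = max 0 (- gr m gradG H x w0)"
  have B0: "0 \<le> B" unfolding B_def by simp
  have KB: "- B \<le> gr m gradG H x y" if "y \<in> ?K" for y
    using w0(2)[OF that] unfolding B_def by linarith
  show ?thesis
  proof (rule that[OF B0])
    fix u assume u: "u \<in> ?D" and r1: "1 \<le> norm (u - x)"
    define r where "r = norm (u - x)"
    have rpos: "0 < r" using r1 unfolding r_def by linarith
    define l where "l = 1 / r"
    have l0: "0 \<le> l" "l \<le> 1" using rpos r1 unfolding l_def r_def by auto
    define w where "w = (1 - l) *\<^sub>R x + l *\<^sub>R u"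
    have wD: "w \<in> ?D" unfolding w_def by (rule dom_convex[OF xD u l0])
    have wx: "w - x = l *\<^sub>R (u - x)" unfolding w_def by (simp add: algebra_simps)
    have "norm (w - x) = l * r" unfolding wx r_def using l0 by simp
    also have "\<dots> = 1" unfolding l_def using rpos by simp
    finally have "w \<in> ?K" using wD by (simp add: dist_norm norm_minus_commute)
    then have "- B \<le> gr m gradG H x w" by (rule KB)
    also have "gr m gradG H x w \<le> (1 - l) * gr m gradG H x x + l * gr m gradG H x u"
      unfolding w_def by (rule gr_convex[OF xD u l0])
    also have "\<dots> = gr m gradG H x u / r" by (simp add: gr_x l_def)
    finally have "- B * r \<le> gr m gradG H x u" using rpos by (simp add: field_simps)
    then show "- B * norm (u - x) \<le> gr m gradG H x u" unfolding r_def .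
  qed
qed

lemma exists_min: "\<exists>p\<in>domF m H. \<forall>v\<in>domF m H. fr m gradG H \<alpha> x p \<le> fr m gradG H \<alpha> x v"
proof -
  let ?D = "domF m H"
  obtain B where B0: "0 \<le> B" and B: "\<And>u. u \<in> ?D \<Longrightarrow> 1 \<le> norm (u - x) \<Longrightarrow> - B * norm (u - x) \<le> gr m gradG H x u"
    using gr_lower by blast
  define R where "R = 2 * \<alpha> * B + 1"
  let ?K = "?D \<inter> cball x R"
  have K: "compact ?K" using dom_closed by (intro closed_Int_compact) auto
  have R1: "1 \<le> R" unfolding R_def using alpha B0 by simp
  have xK: "x \<in> ?K" using xD R1 by auto
  have Kc: "continuous_on ?K (fr m gradG H \<alpha> x)" by (rule continuous_on_subset[OF fr_cont]) auto
  obtain p where p: "p \<in> ?K" "\<And>y. y \<in> ?K \<Longrightarrow> fr m gradG H \<alpha> x p \<le> fr m gradG H \<alpha> x y"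
    using continuous_attains_inf[OF K _ Kc] xK by blast
  have px: "fr m gradG H \<alpha> x p \<le> 0" using p(2)[OF xK] fr_x by simp
  show ?thesis
  proof (intro bexI[of _ p] ballI)
    show "p \<in> ?D" using p(1) by simp
    fix v assume v: "v \<in> ?D"
    show "fr m gradG H \<alpha> x p \<le> fr m gradG H \<alpha> x v"
    proof (cases "norm (v - x) \<le> R")
      case True
      then have "v \<in> ?K" using v by (simp add: dist_norm norm_minus_commute)
      then show ?thesis by (rule p(2))
    next
      case False
      define r where "r = norm (v - x)"
      have rR: "R < r" using False unfolding r_def by simp
      have gb: "- B * r \<le> gr m gradG H x v" using B[OF v] rR R1 unfolding r_def by simp
      have "2 * \<alpha> * B < r" using rR unfolding R_def by simp
      then have "2 * \<alpha> * B * r < r * r" using rR R1 by (intro mult_strict_right_mono) auto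
      then have "B * r < r ^ 2 / (2 * \<alpha>)" using alpha by (simp add: field_simps power2_eq_square)
      then have "0 < fr m gradG H \<alpha> x v" using gb unfolding fr_def r_def by simp
      then show ?thesis using px by simp
    qed
  qed
qed

lemma norm_mid:
  fixes a b :: 'a
  shows "norm ((1/2) *\<^sub>R (a + b)) ^ 2 = (norm a ^ 2 + norm b ^ 2) / 2 - norm (a - b) ^ 2 / 4"
proof -
  have e1: "norm ((1/2) *\<^sub>R (a + b)) ^ 2 = norm (a + b) ^ 2 / 4" by (simp add: power2_eq_square)
  have e2: "norm (a + b) ^ 2 + norm (a - b) ^ 2 = 2 * norm a ^ 2 + 2 * norm b ^ 2"
    by (simp add: power2_norm_eq_inner inner_add_left inner_add_right inner_diff_left inner_diff_right inner_commute)
  have L: "\<And>(X::real) (S::real) (T::real) (A::real) (B::real). X = S/4 \<Longrightarrow> S + T = 2*A+2*B \<Longrightarrow> X = (A+B)/2 - T/4" by (simp add: field_simps)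
  show ?thesis by (rule L[OF e1 e2])
qed

lemma p_char:
  shows "p_alpha m gradG H \<alpha> x \<in> domF m H"
    and "\<And>v. v \<in> domF m H \<Longrightarrow> fr m gradG H \<alpha> x (p_alpha m gradG H \<alpha> x) \<le> fr m gradG H \<alpha> x v"
proof -
  let ?D = "domF m H"
  let ?P = "\<lambda>u. \<forall>v. prox_obj m gradG H \<alpha> x u \<le> prox_obj m gradG H \<alpha> x v"
  obtain p where pD: "p \<in> ?D" and pm: "\<And>v. v \<in> ?D \<Longrightarrow> fr m gradG H \<alpha> x p \<le> fr m gradG H \<alpha> x v"
    using exists_min by blast
  have Pp: "?P p"
  proof
    fix v show "prox_obj m gradG H \<alpha> x p \<le> prox_obj m gradG H \<alpha> x v"
      by (cases "v \<in> ?D") (simp_all add: prox_D prox_nD pD pm)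
  qed
  have uniq: "q = p" if Pq: "?P q" for q
  proof -
    have qx: "prox_obj m gradG H \<alpha> x q \<le> prox_obj m gradG H \<alpha> x x" using Pq by blast
    have qD: "q \<in> ?D"
    proof (rule ccontr)
      assume "q \<notin> ?D"
      then have "prox_obj m gradG H \<alpha> x q = \<infinity>" by (rule prox_nD)
      then show False using qx unfolding prox_D[OF xD] by simp
    qed
    have "prox_obj m gradG H \<alpha> x q \<le> prox_obj m gradG H \<alpha> x p" using Pq by blast
    then have qp: "fr m gradG H \<alpha> x q \<le> fr m gradG H \<alpha> x p" unfolding prox_D[OF qD] prox_D[OF pD] by simp
    define z where "z = (1 - 1/2) *\<^sub>R p + (1/2) *\<^sub>R q"
    have zD: "z \<in> ?D" unfolding z_def by (rule dom_convex[OF pD qD]) auto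
    have gz: "gr m gradG H x z \<le> (1 - 1/2) * gr m gradG H x p + (1/2) * gr m gradG H x q"
      unfolding z_def by (rule gr_convex[OF pD qD]) auto
    have hx: "(1/2) *\<^sub>R x + (1/2) *\<^sub>R x = x" by (simp add: scaleR_left_distrib[symmetric])
    have zx: "z - x = (1/2) *\<^sub>R ((p - x) + (q - x))" unfolding z_def using hx by (simp add: algebra_simps)
    have nz: "norm (z - x) ^ 2 = (norm (p - x) ^ 2 + norm (q - x) ^ 2) / 2 - norm (p - q) ^ 2 / 4"
      unfolding zx norm_mid by simp
    have h1: "fr m gradG H \<alpha> x p \<le> fr m gradG H \<alpha> x z" by (rule pm[OF zD])
    have h2: "norm (z - x) ^ 2 / (2 * \<alpha>) = (norm (p - x) ^ 2 / (2 * \<alpha>) + norm (q - x) ^ 2 / (2 * \<alpha>)) / 2 - norm (p - q) ^ 2 / (8 * \<alpha>)"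
      unfolding nz using alpha by (simp add: field_simps)
    have "fr m gradG H \<alpha> x p \<le> (fr m gradG H \<alpha> x p + fr m gradG H \<alpha> x q) / 2 - norm (p - q) ^ 2 / (8 * \<alpha>)"
    proof -
      have L2: "gp + P \<le> (gp + P + (gq + Q))/2 - D"
        if "gp + P \<le> gz + Z" "Z = (P + Q)/2 - D" "gz \<le> (1-1/2)*gp + 1/2*gq"
        for gp P gz Z gq Q D :: real
        using that by (simp add: field_simps)
      show ?thesis unfolding fr_def by (rule L2[OF h1[unfolded fr_def] h2 gz])
    qed
    moreover have L4: "c \<le> 0" if "a \<le> (a + b) / 2 - c" "b \<le> a" for a b c :: real
      using that by (simp add: field_simps)
    ultimately have "norm (p - q) ^ 2 / (8 * \<alpha>) \<le> 0" using qp by blast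
    then have "norm (p - q) ^ 2 \<le> 0" using alpha by (simp add: divide_le_0_iff)
    then show "q = p" by simp
  qed
  have "p_alpha m gradG H \<alpha> x = p" unfolding p_alpha_def
    by (rule the1_equality) (use Pp uniq in blast)+
  then show "p_alpha m gradG H \<alpha> x \<in> ?D" and "\<And>v. v \<in> ?D \<Longrightarrow> fr m gradG H \<alpha> x (p_alpha m gradG H \<alpha> x) \<le> fr m gradG H \<alpha> x v"
    using pD pm by auto
qed

lemma p_opt:
  assumes gamma: "0 < \<gamma>" "\<gamma> < 2 / \<alpha>"
  shows "gr m gradG H x (p_alpha m gradG H \<alpha> x) + \<gamma> / 2 * norm (p_alpha m gradG H \<alpha> x - x) ^ 2 \<le> 0"
proof -
  let ?p = "p_alpha m gradG H \<alpha> x"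
  let ?g = "gr m gradG H x ?p"
  define N where "N = norm (?p - x) ^ 2 / (2 * \<alpha>)"
  have N0: "0 \<le> N" unfolding N_def using alpha by simp
  have ag: "\<alpha> * \<gamma> < 2" using gamma alpha by (simp add: field_simps)
  define s where "s = min 1 (2 - \<alpha> * \<gamma>)"
  have s: "0 < s" "s \<le> 1" "s \<le> 2 - \<alpha> * \<gamma>" using ag unfolding s_def by auto
  define y where "y = (1 - s) *\<^sub>R ?p + s *\<^sub>R x"
  have yD: "y \<in> domF m H" unfolding y_def using s by (intro dom_convex[OF p_char(1) xD]) auto
  have gy: "gr m gradG H x y \<le> (1 - s) * ?g + s * gr m gradG H x x"
    unfolding y_def using s by (intro gr_convex[OF p_char(1) xD]) auto
  have yx: "y - x = (1 - s) *\<^sub>R (?p - x)" unfolding y_def by (simp add: algebra_simps)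
  have ny: "norm (y - x) ^ 2 / (2 * \<alpha>) = (1 - s)^2 * N"
    unfolding yx N_def using s by (simp add: power_mult_distrib)
  have "fr m gradG H \<alpha> x ?p \<le> fr m gradG H \<alpha> x y" by (rule p_char(2)[OF yD])
  then have "?g + N \<le> (1 - s) * ?g + (1 - s)^2 * N"
    using gy ny unfolding fr_def N_def[symmetric] by (simp add: gr_x)
  then have "s * ?g \<le> s * ((s - 2) * N)" by (simp add: algebra_simps power2_eq_square)
  then have "?g \<le> (s - 2) * N" using s by simp
  also have "\<dots> \<le> (- \<alpha> * \<gamma>) * N" using s N0 by (intro mult_right_mono) auto
  finally have "?g + \<alpha> * \<gamma> * N \<le> 0" by simp
  moreover have "\<alpha> * \<gamma> * N = \<gamma> / 2 * norm (?p - x) ^ 2" unfolding N_def using alpha by simp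
  ultimately show ?thesis by simp
qed

lemma decrease:
  fixes G :: "nat \<Rightarrow> 'a \<Rightarrow> real"
  assumes gamma: "0 < \<gamma>" "\<gamma> < 2 / \<alpha>" and t: "0 \<le> t" "t \<le> 1"
    and arm: "\<forall>j<m. armijo G gradG \<gamma> x (p_alpha m gradG H \<alpha> x - x) j t"
  shows "\<forall>j<m. Fobj G H j (x + t *\<^sub>R (p_alpha m gradG H \<alpha> x - x)) \<le> Fobj G H j x"
proof (intro allI impI)
  fix j assume j: "j < m"
  let ?p = "p_alpha m gradG H \<alpha> x"
  let ?d = "?p - x"
  let ?z = "(1 - t) *\<^sub>R x + t *\<^sub>R ?p"
  have zeq: "x + t *\<^sub>R ?d = ?z" by (simp add: algebra_simps)
  have pD: "?p \<in> domF m H" by (rule p_char(1))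
  have Hz: "H j ?z = ereal (hr H j ?z)" by (rule hr_convex(1)[OF xD pD t j])
  have hz: "hr H j ?z \<le> (1 - t) * hr H j x + t * hr H j ?p" by (rule hr_convex(2)[OF xD pD t j])
  have Ga: "G j ?z \<le> G j x + t * inner (gradG j x) ?d + t * (\<gamma> / 2) * (norm ?d) ^ 2"
    using arm j unfolding armijo_def zeq by blast
  have tg: "trm gradG H x j ?p \<le> gr m gradG H x ?p" unfolding gr_def by (rule Max_ge) (use j in auto)
  have op: "gr m gradG H x ?p + \<gamma> / 2 * norm ?d ^ 2 \<le> 0" by (rule p_opt[OF gamma])
  have "t * (trm gradG H x j ?p + \<gamma> / 2 * norm ?d ^ 2) \<le> 0"
    using tg op t by (intro mult_nonneg_nonpos) auto
  then have "t * inner (gradG j x) ?d + t * hr H j ?p - t * hr H j x + t * (\<gamma> / 2) * norm ?d ^ 2 \<le> 0"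
    unfolding trm_def by (simp add: algebra_simps)
  then have real: "G j ?z + hr H j ?z \<le> G j x + hr H j x"
    using Ga hz by (simp add: algebra_simps)
  show "Fobj G H j (x + t *\<^sub>R ?d) \<le> Fobj G H j x"
    unfolding zeq Fobj_def Hz Hfin[OF xD j] using real by simp
qed

end

lemma step_decrease:
  fixes G :: "nat \<Rightarrow> 'a::euclidean_space \<Rightarrow> real"
  assumes m_pos: "0 < m"
    and H_pc: "\<And>j. j < m \<Longrightarrow> proper_convex_ext (H j)"
    and H_cont: "\<And>j. j < m \<Longrightarrow> continuous_on {y. H j y \<noteq> \<infinity>} (H j)"
    and dom_closed: "closed (domF m H)"
    and alpha: "0 < \<alpha>"
    and gamma: "0 < \<gamma>" "\<gamma> < 2 / \<alpha>"
    and tau: "0 < \<tau>1" "\<tau>2 < 1"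
    and xD: "x \<in> domF m H"
    and st: "mpg_step m G gradG H \<alpha> \<gamma> \<tau>1 \<tau>2 x x'"
  shows "\<forall>j<m. Fobj G H j x' \<le> Fobj G H j x"
proof -
  let ?p = "p_alpha m gradG H \<alpha> x"
  let ?d = "?p - x"
  obtain t tk where
    S31: "\<exists>s N. s 0 = 1 \<and> backtrack_chain \<tau>1 \<tau>2 s N \<and> t = s N" and
    S33: "(Fle m G H (x + t *\<^sub>R ?d) x \<and> tk = t) \<or>
          (\<exists>s N. s 0 = t \<and> backtrack_chain \<tau>1 \<tau>2 s N \<and>
                  (\<forall>j<m. armijo G gradG \<gamma> x ?d j (s N)) \<and> tk = s N)" and
    x': "x' = x + tk *\<^sub>R ?d"
    using st unfolding mpg_step_def Let_def by blast
  obtain s N where s: "s 0 = 1" "backtrack_chain \<tau>1 \<tau>2 s N" "t = s N" using S31 by blast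
  have t01: "0 \<le> t \<and> t \<le> 1" using chain_bounds[OF s(2) tau] s by simp
  from S33 show ?thesis
  proof
    assume "Fle m G H (x + t *\<^sub>R ?d) x \<and> tk = t"
    then show ?thesis unfolding x' Fle_def by simp
  next
    assume "\<exists>s N. s 0 = t \<and> backtrack_chain \<tau>1 \<tau>2 s N \<and> (\<forall>j<m. armijo G gradG \<gamma> x ?d j (s N)) \<and> tk = s N"
    then obtain s2 N2 where s2: "s2 0 = t" "backtrack_chain \<tau>1 \<tau>2 s2 N2"
      "\<forall>j<m. armijo G gradG \<gamma> x ?d j (s2 N2)" "tk = s2 N2" by blast
    have tk01: "0 \<le> tk \<and> tk \<le> 1" using chain_bounds[OF s2(2) tau] s2 t01 by simp
    show ?thesis unfolding x'
      using decrease[OF m_pos H_pc H_cont dom_closed alpha xD gamma, of tk G] tk01 s2(3,4) by simp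
  qed
qed

lemma Fobj_dom:
  assumes "x \<in> domF m H" "\<forall>j<m. Fobj G H j x' \<le> Fobj G H j x"
    and H_pc: "\<And>j. j < m \<Longrightarrow> proper_convex_ext (H j)"
  shows "x' \<in> domF m H"
  unfolding domF_def
proof (intro CollectI allI impI)
  fix j assume j: "j < m"
  have "H j x < \<infinity>" using assms(1) j unfolding domF_def by blast
  moreover have "H j x \<noteq> -\<infinity>" using H_pc[OF j] unfolding proper_convex_ext_def by blast
  ultimately obtain r where r: "H j x = ereal r" by (cases "H j x") auto
  have "Fobj G H j x' \<le> Fobj G H j x" using assms(2) j by blast
  then have "ereal (G j x') + H j x' \<le> ereal (G j x + r)" unfolding Fobj_def r by simp
  then show "H j x' < \<infinity>" by (cases "H j x'") auto
qed

theorem mainTheorem3: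
  fixes m :: nat
    and G :: "nat \<Rightarrow> 'a::euclidean_space \<Rightarrow> real"
    and gradG :: "nat \<Rightarrow> 'a \<Rightarrow> 'a"
    and H :: "nat \<Rightarrow> 'a \<Rightarrow> ereal"
    and \<alpha> \<gamma> \<tau>1 \<tau>2 :: real
    and x :: "nat \<Rightarrow> 'a"
    and k :: nat
  assumes m_pos: "0 < m"
    and G_grad: "\<And>j y. j < m \<Longrightarrow> GDERIV (G j) y :> gradG j y"
    and G_C1: "\<And>j. j < m \<Longrightarrow> continuous_on UNIV (gradG j)"
    and G_convex: "\<And>j. j < m \<Longrightarrow> convex_on UNIV (G j)"
    and H_pc: "\<And>j. j < m \<Longrightarrow> proper_convex_ext (H j)"
    and H_cont: "\<And>j. j < m \<Longrightarrow> continuous_on {y. H j y \<noteq> \<infinity>} (H j)"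
    and dom_ne: "domF m H \<noteq> {}"
    and dom_closed: "closed (domF m H)"
    and alpha: "0 < \<alpha>"
    and gamma: "0 < \<gamma>" "\<gamma> < 2 / \<alpha>"
    and tau: "0 < \<tau>1" "\<tau>1 < \<tau>2" "\<tau>2 < 1"
    and x0: "x 0 \<in> domF m H"
    and gen: "\<And>i. i \<le> k \<Longrightarrow> mpg_step m G gradG H \<alpha> \<gamma> \<tau>1 \<tau>2 (x i) (x (Suc i))"
  shows "\<forall>j<m. Fobj G H j (x (Suc k)) \<le> Fobj G H j (x k)"
proof -
  have tau': "0 < \<tau>1" "\<tau>2 < 1" using tau by auto
  have dom: "i \<le> k \<Longrightarrow> x i \<in> domF m H" for i
  proof (induction i)
    case 0 then show ?case using x0 by simp
  next
    case (Suc i)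
    have ik: "i \<le> k" using Suc.prems by simp
    have xi: "x i \<in> domF m H" using Suc.IH ik by simp
    have "\<forall>j<m. Fobj G H j (x (Suc i)) \<le> Fobj G H j (x i)"
      by (rule step_decrease[OF m_pos H_pc H_cont dom_closed alpha gamma tau' xi gen[OF ik]])
    then show ?case by (rule Fobj_dom[OF xi _ H_pc])
  qed
  show ?thesis
    by (rule step_decrease[OF m_pos H_pc H_cont dom_closed alpha gamma tau' dom gen]) simp_all
qed

end
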